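(* Under Condition ASM (see context), $\|\mathbb{E}_n[x_ir_i]\|_\infty\leqslant\min\{\sigma/\sqrt n,\ c_s\}$.
   Context: Condition ASM: observations $(y_i,z_i)$, $i=1,\dots,n$, $z_i$ fixed, $y_i=f(z_i)+\varepsilon_i$, $\varepsilon_i$ i.i.d. $N(0,\sigma^2)$, $\sigma>0$; $f_i=f(z_i)$, $\mathbb{E}_n[a_i]=n^{-1}\sum_ia_i$; $x_i=P(z_i)\in\mathbb{R}^p$ (including a constant) normalized so that $\mathbb{E}_n[x_{ij}^2]=1$ for each $j$. $\beta_0$ is any solution of $\min_{\beta\in\mathbb{R}^p}\mathbb{E}_n[(f_i-x_i'\beta)^2]+\sigma^2\|\beta\|_0/n$, with $\|\beta\|_0$ the number of nonzero entries; $s=\|\beta_0\|_0$; $r_i=f_i-x_i'\beta_0$; $c_s=\sqrt{\mathbb{E}_n[r_i^2]}$, and $c_s\leqslant K\sigma\sqrt{s/n}$ for an absolute constant $K$. *)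

theory Defs
  imports "HOL-Analysis.Analysis"
begin

definition En :: "nat \<Rightarrow> (nat \<Rightarrow> real) \<Rightarrow> real" where
  "En n a = (\<Sum>i<n. a i) / real n"

definition l0norm :: "real ^ 'p \<Rightarrow> nat" where
  "l0norm \<beta> = card {j. \<beta> $ j \<noteq> 0}"

definition obj :: "nat \<Rightarrow> (nat \<Rightarrow> real) \<Rightarrow> (nat \<Rightarrow> real ^ 'p) \<Rightarrow> real \<Rightarrow> real ^ 'p \<Rightarrow> real" where
  "obj n f x \<sigma> \<beta> = En n (\<lambda>i. (f i - x i \<bullet> \<beta>)\<^sup>2) + \<sigma>\<^sup>2 * real (l0norm \<beta>) / real n"

end

theory Submission
  imports Defs
begin

lemma infnorm_le_cart:
  fixes v :: "real ^ 'p"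
  assumes "\<And>j. \<bar>v $ j\<bar> \<le> B"
  shows "infnorm v \<le> B"
  unfolding infnorm_def infnorm_set_image
proof (rule cSup_least)
  show "(\<lambda>b. \<bar>v \<bullet> b\<bar>) ` Basis \<noteq> {}" by simp
next
  fix y assume "y \<in> (\<lambda>b. \<bar>v \<bullet> b\<bar>) ` Basis"
  then obtain b where b: "b \<in> Basis" "y = \<bar>v \<bullet> b\<bar>" by auto
  then obtain i where "b = axis i 1" by (auto simp: Basis_vec_def)
  then show "y \<le> B" using b assms by (simp add: inner_axis)
qed

lemma En_expand:
  "En n (\<lambda>i. (r i - t * a i)\<^sup>2) = En n (\<lambda>i. (r i)\<^sup>2) - 2 * t * En n (\<lambda>i. a i * r i) + t\<^sup>2 * En n (\<lambda>i. (a i)\<^sup>2)"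
proof -
  have "(\<Sum>i<n. (r i - t * a i)\<^sup>2) = (\<Sum>i<n. (r i)\<^sup>2) - 2 * t * (\<Sum>i<n. a i * r i) + t\<^sup>2 * (\<Sum>i<n. (a i)\<^sup>2)"
    by (simp add: power2_eq_square algebra_simps sum.distrib sum_subtractf sum_distrib_left)
  then show ?thesis unfolding En_def by (simp add: diff_divide_distrib add_divide_distrib)
qed

lemma l0norm_upd:
  fixes \<beta> :: "real ^ 'p"
  shows "l0norm (\<beta> + axis j t) \<le> l0norm \<beta> + 1"
proof -
  have "{k. (\<beta> + axis j t) $ k \<noteq> 0} \<subseteq> insert j {k. \<beta> $ k \<noteq> 0}"
    by (auto simp: axis_def)
  then have "card {k. (\<beta> + axis j t) $ k \<noteq> 0} \<le> card (insert j {k. \<beta> $ k \<noteq> 0})"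
    by (intro card_mono) auto
  also have "\<dots> \<le> card {k. \<beta> $ k \<noteq> 0} + 1"
    by (metis Suc_eq_plus1 card_insert_le_m1 diff_Suc_1 finite le_SucI le_refl card_insert_if)
  finally show ?thesis unfolding l0norm_def .
qed

theorem lemma6:
  fixes n :: nat and f :: "nat \<Rightarrow> real" and x :: "nat \<Rightarrow> real ^ 'p"
    and \<sigma> K :: real and \<beta>0 :: "real ^ 'p"
  assumes n_pos: "n \<ge> 1"
    and sigma_pos: "\<sigma> > 0"
    and const: "\<exists>j. \<forall>i<n. x i $ j = 1"
    and normalized: "\<forall>j. En n (\<lambda>i. (x i $ j)\<^sup>2) = 1"
    and beta0_min: "\<forall>\<beta>. obj n f x \<sigma> \<beta>0 \<le> obj n f x \<sigma> \<beta>"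
    and cs_bound: "sqrt (En n (\<lambda>i. (f i - x i \<bullet> \<beta>0)\<^sup>2))
                     \<le> K * \<sigma> * sqrt (real (l0norm \<beta>0) / real n)"
  shows "infnorm (\<chi> j. En n (\<lambda>i. x i $ j * (f i - x i \<bullet> \<beta>0)))
           \<le> min (\<sigma> / sqrt (real n)) (sqrt (En n (\<lambda>i. (f i - x i \<bullet> \<beta>0)\<^sup>2)))"
proof (rule infnorm_le_cart)
  fix j
  define r where "r i = f i - x i \<bullet> \<beta>0" for i
  define a where "a = En n (\<lambda>i. x i $ j * r i)"
  define R where "R = En n (\<lambda>i. (r i)\<^sup>2)"
  have key: "En n (\<lambda>i. (r i - t * x i $ j)\<^sup>2) = R - 2 * t * a + t\<^sup>2" for t
    using En_expand[of n r t "\<lambda>i. x i $ j"] normalized unfolding a_def R_def by simp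
  have nn: "0 \<le> En n (\<lambda>i. (r i - a * x i $ j)\<^sup>2)"
    unfolding En_def by (intro divide_nonneg_nonneg sum_nonneg) auto
  have aR: "a\<^sup>2 \<le> R" using nn key[of a] by (simp add: power2_eq_square)
  have eq: "f i - x i \<bullet> (\<beta>0 + axis j a) = r i - a * x i $ j" for i
    by (simp add: r_def inner_add_right inner_axis)
  have "obj n f x \<sigma> \<beta>0 \<le> obj n f x \<sigma> (\<beta>0 + axis j a)" using beta0_min by blast
  also have "\<dots> = R - a\<^sup>2 + \<sigma>\<^sup>2 * real (l0norm (\<beta>0 + axis j a)) / real n"
    unfolding obj_def eq key by (simp add: power2_eq_square)
  also have "\<dots> \<le> R - a\<^sup>2 + \<sigma>\<^sup>2 * (real (l0norm \<beta>0) + 1) / real n"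
    using l0norm_upd[of \<beta>0 j a] n_pos
    by (intro add_left_mono divide_right_mono mult_left_mono) auto
  finally have "a\<^sup>2 \<le> \<sigma>\<^sup>2 / real n"
    unfolding obj_def R_def r_def using n_pos by (simp add: add_divide_distrib distrib_left)
  then have "sqrt (a\<^sup>2) \<le> sqrt (\<sigma>\<^sup>2 / real n)" by (rule real_sqrt_le_mono)
  then have 1: "\<bar>a\<bar> \<le> \<sigma> / sqrt (real n)" using sigma_pos by (simp add: real_sqrt_divide)
  have "sqrt (a\<^sup>2) \<le> sqrt R" using aR by (rule real_sqrt_le_mono)
  then have 2: "\<bar>a\<bar> \<le> sqrt R" by simp
  show "\<bar>(\<chi> j. En n (\<lambda>i. x i $ j * (f i - x i \<bullet> \<beta>0))) $ j\<bar>
        \<le> min (\<sigma> / sqrt (real n)) (sqrt (En n (\<lambda>i. (f i - x i \<bullet> \<beta>0)\<^sup>2)))"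
    using 1 2 unfolding a_def R_def r_def by simp
qed

end
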